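(* Let $D$ be a digraph with at least one cycle, and let $c$ and $g$ be its circumference and girth, respectively. Then $\chi_A(D)\le \left\lceil \frac{c-1}{g-1}\right\rceil+1$.
   Context: Digraphs are finite and loopless; paths and cycles are directed. The girth (resp. circumference) of a digraph is the length of a shortest (resp. longest) directed cycle. A set of vertices is acyclic if the subdigraph it induces contains no directed cycle. The dichromatic number $\chi_A(D)$ is the minimum $k$ such that $V(D)$ can be colored with $k$ colors so that every color class is acyclic. *)

theory Defs
  imports Complex_Main
begin

definition digraph :: "'a set \<Rightarrow> ('a \<times> 'a) set \<Rightarrow> bool" where
  "digraph V E \<longleftrightarrow> finite V \<and> E \<subseteq> V \<times> V \<and> (\<forall>v. (v, v) \<notin> E)"

text \<open>Since E is loopless every cycle has length at least 2.\<close>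
definition is_cycle :: "('a \<times> 'a) set \<Rightarrow> 'a list \<Rightarrow> bool" where
  "is_cycle E cs \<longleftrightarrow> cs \<noteq> [] \<and> distinct cs \<and>
     (\<forall>i < length cs. (cs ! i, cs ! ((i + 1) mod length cs)) \<in> E)"

definition cycle_lengths :: "('a \<times> 'a) set \<Rightarrow> nat set" where
  "cycle_lengths E = {length cs | cs. is_cycle E cs}"

definition girth :: "('a \<times> 'a) set \<Rightarrow> nat" where
  "girth E = Min (cycle_lengths E)"

definition circumference :: "('a \<times> 'a) set \<Rightarrow> nat" where
  "circumference E = Max (cycle_lengths E)"

definition acyclic_set :: "('a \<times> 'a) set \<Rightarrow> 'a set \<Rightarrow> bool" where
  "acyclic_set E S \<longleftrightarrow> \<not> (\<exists>cs. is_cycle (E \<inter> (S \<times> S)) cs)"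

definition dichromatic_number :: "'a set \<Rightarrow> ('a \<times> 'a) set \<Rightarrow> nat" where
  "dichromatic_number V E = (LEAST k. \<exists>f. f ` V \<subseteq> {..<k} \<and>
      (\<forall>i<k. acyclic_set E {v \<in> V. f v = i}))"

end

theory Submission
  imports Defs
begin

definition spath :: "('a \<times> 'a) set \<Rightarrow> 'a set \<Rightarrow> 'a list \<Rightarrow> bool" where
  "spath E W p \<longleftrightarrow> p \<noteq> [] \<and> distinct p \<and> set p \<subseteq> W \<and>
     (\<forall>i. Suc i < length p \<longrightarrow> (p ! i, p ! Suc i) \<in> E)"

lemma spath_mono: "spath E W p \<Longrightarrow> W \<subseteq> W' \<Longrightarrow> spath E W' p"
  unfolding spath_def by auto

lemma spath_Cons:
  assumes "spath E W p" "x \<in> W" "x \<notin> set p" "(x, hd p) \<in> E"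
  shows "spath E W (x # p)"
  using assms unfolding spath_def
  by (auto simp: nth_Cons hd_conv_nth split: nat.splits)

lemma dfs:
  assumes "finite W" "\<forall>v. (v,v) \<notin> E" "X \<subseteq> W"
    "\<forall>w\<in>W. \<exists>x\<in>X. (x, w) \<in> (E \<inter> W \<times> W)\<^sup>*"
  shows "\<exists>d rk. (\<forall>v\<in>W. rk v < card W)
     \<and> (\<forall>v\<in>W. \<exists>x\<in>X. \<exists>p. spath E W p \<and> hd p = x \<and> last p = v \<and> length p = Suc (d v))
     \<and> (\<forall>u\<in>W. \<forall>v\<in>W. (u,v) \<in> E \<longrightarrow> rk v < rk u \<or>
          (d v < d u \<and> (\<exists>p. spath E W p \<and> hd p = v \<and> last p = u \<and> length p = Suc (d u - d v))))"
  using assms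
proof (induction "card W" arbitrary: W X rule: less_induct)
  case less
  show ?case
  proof (cases "W = {}")
    case True
    then show ?thesis by auto
  next
    case False
    then obtain w where "w \<in> W" by auto
    with less.prems obtain x where xX: "x \<in> X" by auto
    with less.prems have xW: "x \<in> W" by auto
    define Ew where "Ew = E \<inter> W \<times> W"
    define A where "A = {w. (x,w) \<in> Ew\<^sup>*}"
    define A' where "A' = A - {x}"
    define B where "B = W - A"
    define XA where "XA = {y\<in>A'. (x,y) \<in> E}"
    define XB where "XB = X \<inter> B"
    have AW: "A \<subseteq> W"
    proof
      fix y assume "y \<in> A"
      then have "(x,y) \<in> Ew\<^sup>*" by (simp add: A_def)
      then show "y \<in> W" using xW by (induction rule: rtrancl_induct) (auto simp: Ew_def)
    qed
    have xA: "x \<in> A" by (simp add: A_def)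
    have closA: "\<And>u v. u \<in> A \<Longrightarrow> (u,v) \<in> E \<Longrightarrow> v \<in> W \<Longrightarrow> v \<in> A"
    proof -
      fix u v assume "u \<in> A" "(u,v) \<in> E" "v \<in> W"
      moreover have "u \<in> W" using \<open>u \<in> A\<close> AW by auto
      ultimately have "(u,v) \<in> Ew" by (simp add: Ew_def)
      moreover have "(x,u) \<in> Ew\<^sup>*" using \<open>u \<in> A\<close> by (simp add: A_def)
      ultimately show "v \<in> A" by (simp add: A_def)
    qed
    have finW: "finite W" using less.prems by auto
    have finA: "finite A'" "finite A" using AW finW finite_subset unfolding A'_def by auto
    have cardW: "card W = card A + card B" unfolding B_def
      using AW finW by (metis card_Diff_subset finite_subset card_mono le_add_diff_inverse)
    have cardA: "card A = Suc (card A')" unfolding A'_def using xA finA(2)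
      by (rule card_Suc_Diff1[symmetric, rotated])
    have cA': "card A' < card W" using cardW cardA by simp
    have cB: "card B < card W" using cardW cardA by simp
    have domA': "\<forall>w\<in>A'. \<exists>y\<in>XA. (y, w) \<in> (E \<inter> A' \<times> A')\<^sup>*"
    proof
      fix v assume vA': "v \<in> A'"
      have "(x,v) \<in> Ew\<^sup>*" using vA' by (simp add: A'_def A_def)
      then have "v \<noteq> x \<longrightarrow> (\<exists>y\<in>XA. (y, v) \<in> (E \<inter> A' \<times> A')\<^sup>*)"
      proof (induction rule: rtrancl_induct)
        case base
        then show ?case by simp
      next
        case (step y z)
        have zA: "z \<in> A" using step(1,2) unfolding A_def by (meson mem_Collect_eq rtrancl.rtrancl_into_rtrancl)
        have yA: "y \<in> A" using step(1) unfolding A_def by simp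
        show ?case
        proof
          assume "z \<noteq> x"
          show "\<exists>y\<in>XA. (y, z) \<in> (E \<inter> A' \<times> A')\<^sup>*"
          proof (cases "y = x")
            case True
            then have "z \<in> XA" using step(2) zA \<open>z \<noteq> x\<close> by (auto simp: XA_def A'_def Ew_def)
            then show ?thesis by blast
          next
            case False
            with step(3) obtain y0 where "y0 \<in> XA" "(y0, y) \<in> (E \<inter> A' \<times> A')\<^sup>*" by blast
            moreover have "(y,z) \<in> E \<inter> A' \<times> A'" using step(2) yA zA False \<open>z \<noteq> x\<close>
              by (auto simp: A'_def Ew_def)
            ultimately show ?thesis by (meson rtrancl.rtrancl_into_rtrancl)
          qed
        qed
      qed
      then show "\<exists>y\<in>XA. (y, v) \<in> (E \<inter> A' \<times> A')\<^sup>*" using vA' by (simp add: A'_def)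
    qed
    have domB: "\<forall>w\<in>B. \<exists>y\<in>XB. (y, w) \<in> (E \<inter> B \<times> B)\<^sup>*"
    proof
      fix v assume vB: "v \<in> B"
      then obtain x' where x': "x' \<in> X" "(x', v) \<in> Ew\<^sup>*" using less.prems by (auto simp: B_def Ew_def)
      have x'W: "x' \<in> W" using x' less.prems by auto
      have "v \<notin> A \<longrightarrow> (x', v) \<in> (E \<inter> B \<times> B)\<^sup>* \<and> x' \<in> B" using x'(2)
      proof (induction rule: rtrancl_induct)
        case base
        then show ?case using x'W by (auto simp: B_def)
      next
        case (step y z)
        show ?case
        proof
          assume "z \<notin> A"
          then have "y \<notin> A" using closA step(2) by (auto simp: Ew_def)
          then have "(x', y) \<in> (E \<inter> B \<times> B)\<^sup>*" "x' \<in> B" using step(3) by auto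
          moreover have "(y,z) \<in> E \<inter> B \<times> B" using step(2) \<open>y \<notin> A\<close> \<open>z \<notin> A\<close>
            by (auto simp: B_def Ew_def)
          ultimately show "(x', z) \<in> (E \<inter> B \<times> B)\<^sup>* \<and> x' \<in> B" by (meson rtrancl.rtrancl_into_rtrancl)
        qed
      qed
      then show "\<exists>y\<in>XB. (y, v) \<in> (E \<inter> B \<times> B)\<^sup>*" using vB x'(1) by (auto simp: B_def XB_def)
    qed
    obtain d1 rk1 where
      r1: "\<forall>v\<in>A'. rk1 v < card A'"
      and p1: "\<forall>v\<in>A'. \<exists>x\<in>XA. \<exists>p. spath E A' p \<and> hd p = x \<and> last p = v \<and> length p = Suc (d1 v)"
      and q1: "\<forall>u\<in>A'. \<forall>v\<in>A'. (u,v) \<in> E \<longrightarrow> rk1 v < rk1 u \<or>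
          (d1 v < d1 u \<and> (\<exists>p. spath E A' p \<and> hd p = v \<and> last p = u \<and> length p = Suc (d1 u - d1 v)))"
      using less.hyps[OF cA', of XA] finA domA' less.prems(2) by (auto simp: XA_def)
    obtain d2 rk2 where
      r2: "\<forall>v\<in>B. rk2 v < card B"
      and p2: "\<forall>v\<in>B. \<exists>x\<in>XB. \<exists>p. spath E B p \<and> hd p = x \<and> last p = v \<and> length p = Suc (d2 v)"
      and q2: "\<forall>u\<in>B. \<forall>v\<in>B. (u,v) \<in> E \<longrightarrow> rk2 v < rk2 u \<or>
          (d2 v < d2 u \<and> (\<exists>p. spath E B p \<and> hd p = v \<and> last p = u \<and> length p = Suc (d2 u - d2 v)))"
      using less.hyps[OF cB, of XB] finW domB less.prems(2) by (auto simp: XB_def B_def)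
    define d where "d v = (if v = x then 0 else if v \<in> A then Suc (d1 v) else d2 v)" for v
    define rk where "rk v = (if v = x then card A' else if v \<in> A then rk1 v else Suc (card A' + rk2 v))" for v
    have A'W: "A' \<subseteq> W" and BW: "B \<subseteq> W" using AW by (auto simp: A'_def B_def)
    have rootA': "\<exists>p. spath E W p \<and> hd p = x \<and> last p = v \<and> length p = Suc (d v)" if vin: "v \<in> A'" for v
    proof -
      obtain y p where yp: "y \<in> XA" "spath E A' p" "hd p = y" "last p = v" "length p = Suc (d1 v)"
        using p1 vin by blast
      have sp: "spath E W p" using spath_mono[OF yp(2) A'W] .
      have xn: "x \<notin> set p" using yp(2) unfolding spath_def A'_def by auto
      have xe: "(x, hd p) \<in> E" using yp(1,3) unfolding XA_def by simp
      have "spath E W (x # p)" using spath_Cons[OF sp xW xn xe] .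
      moreover have "d v = Suc (d1 v)" using that unfolding d_def A'_def by simp
      moreover have "last (x # p) = v" using yp(2,4) by (simp add: spath_def)
      ultimately show ?thesis using yp(5) by (intro exI[of _ "x # p"]) simp
    qed
    show ?thesis
    proof (rule exI[of _ d], rule exI[of _ rk], intro conjI ballI impI)
      fix v assume "v \<in> W"
      show "rk v < card W"
      proof (cases "v = x")
        case True
        then show ?thesis using cA' by (simp add: rk_def)
      next
        case False
        show ?thesis
        proof (cases "v \<in> A")
          case True
          then have "v \<in> A'" using False by (simp add: A'_def)
          then have "rk1 v < card A'" using r1 by blast
          then show ?thesis using cA' False True by (simp add: rk_def)
        next
          case nA: False
          then have "v \<in> B" using \<open>v \<in> W\<close> by (simp add: B_def)
          then have "rk2 v < card B" using r2 by blast
          then show ?thesis using False nA cardW cardA by (simp add: rk_def)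
        qed
      qed
    next
      fix v assume vW: "v \<in> W"
      show "\<exists>x\<in>X. \<exists>p. spath E W p \<and> hd p = x \<and> last p = v \<and> length p = Suc (d v)"
      proof (cases "v \<in> A")
        case True
        show ?thesis
        proof (cases "v = x")
          case True
          then show ?thesis using xX xW by (intro bexI[of _ x] exI[of _ "[x]"]) (auto simp: spath_def d_def)
        next
          case False
          then have "v \<in> A'" using True by (simp add: A'_def)
          then show ?thesis using rootA' xX by blast
        qed
      next
        case False
        then have "v \<in> B" using vW by (simp add: B_def)
        then obtain y p where "y \<in> XB" "spath E B p" "hd p = y" "last p = v" "length p = Suc (d2 v)"
          using p2 by blast
        moreover have "d v = d2 v" using False xA by (auto simp: d_def)
        ultimately show ?thesis using spath_mono[OF _ BW] by (auto simp: XB_def)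
      qed
    next
      fix u v assume uW: "u \<in> W" and vW: "v \<in> W" and uv: "(u,v) \<in> E"
      show "rk v < rk u \<or> (d v < d u \<and> (\<exists>p. spath E W p \<and> hd p = v \<and> last p = u \<and> length p = Suc (d u - d v)))"
      proof (cases "u \<in> A")
        case False
        then have uB: "u \<in> B" using uW by (simp add: B_def)
        have rku: "rk u = Suc (card A' + rk2 u)" using False xA by (auto simp: rk_def)
        show ?thesis
        proof (cases "v \<in> A")
          case True
          then have "rk v \<le> card A'" using r1 by (auto simp: rk_def A'_def less_imp_le)
          then show ?thesis using rku by auto
        next
          case False
          then have vB: "v \<in> B" using vW by (simp add: B_def)
          have dd: "d u = d2 u" "d v = d2 v" "rk v = Suc (card A' + rk2 v)"
            using False \<open>u \<notin> A\<close> xA by (auto simp: d_def rk_def)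
          show ?thesis using q2 uB vB uv dd rku spath_mono[OF _ BW] by fastforce
        qed
      next
        case True
        then have vA: "v \<in> A" using closA uv vW by blast
        show ?thesis
        proof (cases "u = x")
          case True
          then have "v \<noteq> x" using uv less.prems(2) by auto
          then have "v \<in> A'" using vA by (simp add: A'_def)
          then show ?thesis using True r1 \<open>v \<noteq> x\<close> vA by (auto simp: rk_def)
        next
          case False
          then have uA': "u \<in> A'" using True by (simp add: A'_def)
          show ?thesis
          proof (cases "v = x")
            case True
            have "d v = 0" using True by (simp add: d_def)
            moreover have "d u = Suc (d1 u)" using uA' by (auto simp: d_def A'_def)
            ultimately show ?thesis using rootA'[OF uA'] True by simp
          next
            case False
            then have vA': "v \<in> A'" using vA by (simp add: A'_def)
            have dd: "d u = Suc (d1 u)" "d v = Suc (d1 v)" "rk u = rk1 u" "rk v = rk1 v"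
              using uA' vA' by (auto simp: d_def rk_def A'_def)
            show ?thesis using q1 uA' vA' uv dd spath_mono[OF _ A'W] by fastforce
          qed
        qed
      qed
    qed
  qed
qed

lemma spath_cycle:
  assumes "spath E W p" "(last p, hd p) \<in> E"
  shows "is_cycle E p"
  unfolding is_cycle_def
proof (intro conjI allI impI)
  show "p \<noteq> []" "distinct p" using assms(1) by (auto simp: spath_def)
  fix i assume i: "i < length p"
  show "(p ! i, p ! ((i + 1) mod length p)) \<in> E"
  proof (cases "Suc i < length p")
    case True
    then show ?thesis using assms(1) by (simp add: spath_def)
  next
    case False
    then have "i = length p - 1" using i by simp
    moreover have "Suc i = length p" using False i by simp
    then have "(i + 1) mod length p = 0" by simp
    ultimately show ?thesis using assms \<open>p \<noteq> []\<close> by (simp add: last_conv_nth hd_conv_nth)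
  qed
qed

lemma cycle_in_V: "E \<subseteq> V \<times> V \<Longrightarrow> is_cycle E cs \<Longrightarrow> set cs \<subseteq> V"
proof
  fix a assume "E \<subseteq> V \<times> V" "is_cycle E cs" "a \<in> set cs"
  then obtain i where "i < length cs" "cs ! i = a" by (auto simp: in_set_conv_nth)
  then show "a \<in> V" using \<open>is_cycle E cs\<close> \<open>E \<subseteq> V \<times> V\<close> unfolding is_cycle_def by blast
qed

lemma cycle_len2: "\<forall>v. (v,v) \<notin> E \<Longrightarrow> is_cycle E cs \<Longrightarrow> length cs \<ge> 2"
proof (rule ccontr)
  assume "\<forall>v. (v,v) \<notin> E" "is_cycle E cs" "\<not> length cs \<ge> 2"
  moreover have "length cs \<noteq> 0" using \<open>is_cycle E cs\<close> by (simp add: is_cycle_def)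
  ultimately have "length cs = 1" by linarith
  then show False using \<open>is_cycle E cs\<close> \<open>\<forall>v. (v,v) \<notin> E\<close> unfolding is_cycle_def
    by (metis less_one mod_self One_nat_def add_0)
qed

lemma finite_CL:
  assumes "finite V" "E \<subseteq> V \<times> V"
  shows "finite (cycle_lengths E)"
proof (rule finite_subset[of _ "{..card V}"])
  show "cycle_lengths E \<subseteq> {..card V}"
  proof
    fix n assume "n \<in> cycle_lengths E"
    then obtain cs where "is_cycle E cs" "n = length cs" by (auto simp: cycle_lengths_def)
    then have "set cs \<subseteq> V" "distinct cs" using cycle_in_V assms by (auto simp: is_cycle_def)
    then have "length cs \<le> card V" using assms(1) by (metis card_mono distinct_card)
    then show "n \<in> {..card V}" using \<open>n = length cs\<close> by simp
  qed
qed simp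
lemma arith_contra:
  fixes m K da db :: nat
  assumes "m \<ge> 1" "db + m \<le> da" "da \<le> db + m * K"
    "(da div m) mod (K+1) = (db div m) mod (K+1)"
  shows False
proof -
  define q1 where "q1 = da div m"
  define q2 where "q2 = db div m"
  have "(db + m) div m = q2 + 1" using assms(1) by (simp add: q2_def div_add_self2)
  then have h1: "q2 + 1 \<le> q1" using div_le_mono[OF assms(2), of m] by (simp add: q1_def)
  have "(K+1) dvd (q1 - q2)" using assms(4) h1 unfolding q1_def[symmetric] q2_def[symmetric]
    by (meson add_leE mod_eq_dvd_iff_nat)
  then have "q1 \<ge> q2 + K + 1" using h1
    by (metis Suc_eq_plus1 add_leD1 add_less_cancel_left le_add_diff_inverse
    less_eq_Suc_le nat_dvd_not_less not_le_imp_less zero_less_diff)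
  then have "m * q1 \<ge> m * (q2 + (K + 1))" by (intro mult_le_mono2) simp
  moreover have "m * q1 \<le> da" using q1_def by (simp add: mult.commute)
  moreover have "db < m * q2 + m" using assms(1) q2_def
    by (simp add: add.commute dividend_less_times_div)
  ultimately show False using assms(3) by (simp add: algebra_simps)
qed

theorem theorem3:
  fixes V :: "'a set" and E :: "('a \<times> 'a) set"
  assumes "digraph V E"
    and "\<exists>cs. is_cycle E cs"
  shows "real (dichromatic_number V E)
           \<le> real_of_int \<lceil>(real (circumference E) - 1) / (real (girth E) - 1)\<rceil> + 1"
proof -
  have finV: "finite V" and EV: "E \<subseteq> V \<times> V" and loop: "\<forall>v. (v,v) \<notin> E"
    using assms(1) by (auto simp: digraph_def)
  define g where "g = girth E"
  define c where "c = circumference E"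
  have finCL: "finite (cycle_lengths E)" using finite_CL[OF finV EV] .
  obtain cs0 where cs0: "is_cycle E cs0" using assms(2) by blast
  have neCL: "cycle_lengths E \<noteq> {}" using cs0 by (auto simp: cycle_lengths_def)
  have bounds: "g \<le> length cs \<and> length cs \<le> c" if "is_cycle E cs" for cs
  proof -
    have "length cs \<in> cycle_lengths E" using that by (auto simp: cycle_lengths_def)
    then show ?thesis using finCL unfolding g_def c_def girth_def circumference_def by simp
  qed
  have g2: "g \<ge> 2"
  proof -
    have "g \<in> cycle_lengths E" unfolding g_def girth_def using finCL neCL by (rule Min_in)
    then obtain cs where "is_cycle E cs" "g = length cs" by (auto simp: cycle_lengths_def)
    then show ?thesis using cycle_len2[OF loop] by simp
  qed
  have gc: "g \<le> c" using bounds[OF cs0] by simp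
  obtain d rk :: "'a \<Rightarrow> nat" where
      q: "\<forall>u\<in>V. \<forall>v\<in>V. (u,v) \<in> E \<longrightarrow> rk v < rk u \<or>
          (d v < d u \<and> (\<exists>p. spath E V p \<and> hd p = v \<and> last p = u \<and> length p = Suc (d u - d v)))"
  proof -
    have "\<forall>w\<in>V. \<exists>x\<in>V. (x, w) \<in> (E \<inter> V \<times> V)\<^sup>*" by blast
    from dfs[OF finV loop order.refl this] obtain d rk :: "'a \<Rightarrow> nat" where
      "\<forall>u\<in>V. \<forall>v\<in>V. (u,v) \<in> E \<longrightarrow> rk v < rk u \<or>
          (d v < d u \<and> (\<exists>p. spath E V p \<and> hd p = v \<and> last p = u \<and> length p = Suc (d u - d v)))"
      by blast
    then show ?thesis by (rule that)
  qed
  define m where "m = g - 1"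
  define K where "K = nat \<lceil>(real c - 1) / (real g - 1)\<rceil>"
  have m1: "m \<ge> 1" using g2 by (simp add: m_def)
  have cnn: "(real c - 1) / (real g - 1) \<ge> 0" using g2 gc by simp
  have Kr: "real K = real_of_int \<lceil>(real c - 1) / (real g - 1)\<rceil>"
    unfolding K_def using cnn by simp
  have "(real c - 1) / (real g - 1) \<le> real K" using Kr by simp
  then have "real c - 1 \<le> real K * (real g - 1)" using g2 by (simp add: divide_le_eq)
  then have "real (c - 1) \<le> real (m * K)" using g2 gc by (simp add: m_def of_nat_diff algebra_simps)
  then have mK: "c - 1 \<le> m * K" by linarith
  define f where "f v = (d v div m) mod (K + 1)" for v
  have acyc: "acyclic_set E {v \<in> V. f v = i}" for i
  proof -
    define S where "S = {v \<in> V. f v = i}"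
    have "\<not> is_cycle (E \<inter> S \<times> S) cs" for cs
    proof
      assume cyc: "is_cycle (E \<inter> S \<times> S) cs"
      define n where "n = length cs"
      have n0: "n > 0" using cyc by (simp add: is_cycle_def n_def)
      define M where "M = Min (rk ` set cs)"
      have "M \<in> rk ` set cs" unfolding M_def using cyc by (intro Min_in) (auto simp: is_cycle_def)
      then obtain a where a: "a \<in> set cs" "rk a = M" by blast
      then obtain j where j: "j < n" "cs ! j = a" by (auto simp: in_set_conv_nth n_def)
      define b where "b = cs ! ((j + 1) mod n)"
      have bset: "b \<in> set cs" unfolding b_def n_def using n0 by (simp add: n_def)
      have ab: "(a, b) \<in> E \<inter> S \<times> S" using cyc j unfolding is_cycle_def b_def n_def by blast
      have "rk a \<le> rk b" using bset a unfolding M_def by simp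
      moreover have aV: "a \<in> V" and bV: "b \<in> V" using ab by (auto simp: S_def)
      ultimately obtain p where dab: "d b < d a" and p: "spath E V p" "hd p = b" "last p = a"
          "length p = Suc (d a - d b)"
        using q ab by fastforce
      have "is_cycle E p" using spath_cycle[OF p(1)] p(2,3) ab by simp
      then have "g \<le> Suc (d a - d b) \<and> Suc (d a - d b) \<le> c" using bounds p(4) by metis
      then have h1: "d b + m \<le> d a" and h2: "d a \<le> d b + m * K"
        using dab mK by (auto simp: m_def)
      have "f a = f b" using ab by (simp add: S_def)
      then show False using arith_contra[OF m1 h1 h2] by (simp add: f_def)
    qed
    then show ?thesis by (simp add: acyclic_set_def S_def)
  qed
  have "dichromatic_number V E \<le> K + 1"
    unfolding dichromatic_number_def
  proof (rule Least_le, rule exI[of _ f], intro conjI allI impI)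
    show "f ` V \<subseteq> {..<K + 1}" by (auto simp: f_def)
  next
    fix i assume "i < K + 1"
    show "acyclic_set E {v \<in> V. f v = i}" by (rule acyc)
  qed
  then have "real (dichromatic_number V E) \<le> real K + 1" by simp
  then show ?thesis using Kr by (simp add: c_def g_def)
qed

end
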